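(* For all $T\in\mathcal{T}_H$ and all $j\in\{2,\dots,N\}$ it holds $\mathcal{P}_Hb_{j,T}=b_{j,T}$.
   Context: $\mathcal{T}_H$ is a quasi-uniform non-degenerate quadrilateral mesh of a polygonal Lipschitz domain $D\subset\mathbb{R}^d$, mesh size $H$. For fixed $p\in\mathbb{N}_0$, $\mathcal{V}_H$ is the space of elementwise polynomials of coordinate degree $\le p$, $\Pi_H$ the elementwise $L^2$-projection onto $\mathcal{V}_H$, and $\{\Lambda_{j,T}\}_{j=1}^N$, $N=(p+1)^d$, the $L^2(T)$-orthonormal shifted tensor-product Legendre basis on $T$, with $\Lambda_{1,T}$ the constant function. For each $T,j$, $b_{j,T}\in H^1_0(T)$ (extended by zero) satisfies $\Pi_Hb_{j,T}=\Lambda_{j,T}$. $\mathcal{B}_Hv:=\sum_T\sum_j(\int_Tv\Lambda_{j,T}dx)b_{j,T}$. $\Pi_H^0$ is the $L^2$-projection onto piecewise constants; $\mathcal{E}_H$ maps a piecewise constant function to the continuous piecewise bilinear function whose value at an interior node is the average of the adjacent elementwise values and which vanishes at boundary nodes; $\mathcal{I}_H:=\mathcal{E}_H\circ\Pi_H^0$ and $\mathcal{P}_Hv:=\mathcal{I}_Hv+\mathcal{B}_H(v-\mathcal{I}_Hv)$. *)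

theory Defs
  imports "HOL-Analysis.Analysis"
begin

definition is_mesh :: "'a::euclidean_space set set \<Rightarrow> 'a set \<Rightarrow> bool" where
  "is_mesh Th D \<longleftrightarrow>
     finite Th \<and> Th \<noteq> {} \<and>
     (\<forall>T\<in>Th. \<exists>a b. T = cbox a b \<and> (\<forall>i\<in>Basis. a \<bullet> i < b \<bullet> i)) \<and>
     (\<forall>T\<in>Th. \<forall>T'\<in>Th. T \<noteq> T' \<longrightarrow>
         interior T \<inter> interior T' = {} \<and> (T \<inter> T') face_of T \<and> (T \<inter> T') face_of T') \<and>
     \<Union>Th = closure D \<and> D = interior (\<Union>Th) \<and> connected D"

definition lo :: "'a::euclidean_space set \<Rightarrow> 'a \<Rightarrow> real" where
  "lo T i = Inf ((\<lambda>x. x \<bullet> i) ` T)"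

definition hi :: "'a::euclidean_space set \<Rightarrow> 'a \<Rightarrow> real" where
  "hi T i = Sup ((\<lambda>x. x \<bullet> i) ` T)"

definition MI :: "nat \<Rightarrow> ('a::euclidean_space \<Rightarrow> nat) set" where
  "MI p = {\<alpha>. (\<forall>i\<in>Basis. \<alpha> i \<le> p) \<and> (\<forall>i. i \<notin> Basis \<longrightarrow> \<alpha> i = 0)}"

definition mono :: "('a::euclidean_space \<Rightarrow> nat) \<Rightarrow> 'a \<Rightarrow> real" where
  "mono \<alpha> x = (\<Prod>i\<in>Basis. (x \<bullet> i) ^ (\<alpha> i))"

definition Qp :: "nat \<Rightarrow> ('a::euclidean_space \<Rightarrow> real) \<Rightarrow> bool" where
  "Qp p q \<longleftrightarrow> (\<exists>c. \<forall>x. q x = (\<Sum>\<alpha>\<in>MI p. c \<alpha> * mono \<alpha> x))"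

text \<open>The space V_H of elementwise polynomials (as functions on D, modulo
  values on the null set of element boundaries).\<close>
definition VH :: "'a::euclidean_space set set \<Rightarrow> 'a set \<Rightarrow> nat \<Rightarrow> ('a \<Rightarrow> real) \<Rightarrow> bool" where
  "VH Th D p w \<longleftrightarrow>
     (\<lambda>x. indicator D x * w x) \<in> borel_measurable lebesgue \<and>
     (\<forall>T\<in>Th. \<exists>q. Qp p q \<and> (\<forall>x\<in>interior T. w x = q x))"

definition L2proj :: "'a::euclidean_space set set \<Rightarrow> 'a set \<Rightarrow> nat \<Rightarrow> ('a \<Rightarrow> real) \<Rightarrow> ('a \<Rightarrow> real) \<Rightarrow> bool" where
  "L2proj Th D p v w \<longleftrightarrow>
     VH Th D p w \<and> (\<forall>q. VH Th D p q \<longrightarrow> (LINT x:D|lebesgue. (v x - w x) * q x) = 0)"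

text \<open>Shifted Legendre polynomial on [0,1].\<close>
definition shleg :: "nat \<Rightarrow> real \<Rightarrow> real" where
  "shleg n t = (-1) ^ n * (\<Sum>k\<le>n. real (n choose k) * real ((n + k) choose k) * (- t) ^ k)"

text \<open>L2([a,b])-normalised Legendre polynomial of degree n on [a,b].\<close>
definition leg1 :: "nat \<Rightarrow> real \<Rightarrow> real \<Rightarrow> real \<Rightarrow> real" where
  "leg1 n a b x = sqrt ((2 * real n + 1) / (b - a)) * shleg n ((x - a) / (b - a))"

definition legTP :: "('a::euclidean_space \<Rightarrow> nat) \<Rightarrow> 'a set \<Rightarrow> 'a \<Rightarrow> real" where
  "legTP \<alpha> T x = (\<Prod>i\<in>Basis. leg1 (\<alpha> i) (lo T i) (hi T i) (x \<bullet> i))"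

definition legendre_enum :: "nat \<Rightarrow> (nat \<Rightarrow> 'a::euclidean_space \<Rightarrow> nat) \<Rightarrow> bool" where
  "legendre_enum p \<iota> \<longleftrightarrow> bij_betw \<iota> {1..(p + 1) ^ DIM('a)} (MI p) \<and> \<iota> 1 = (\<lambda>_. 0)"

definition Lam :: "(nat \<Rightarrow> 'a::euclidean_space \<Rightarrow> nat) \<Rightarrow> nat \<Rightarrow> 'a set \<Rightarrow> 'a \<Rightarrow> real" where
  "Lam \<iota> j T = legTP (\<iota> j) T"

definition sq_int :: "('a::euclidean_space \<Rightarrow> real) \<Rightarrow> bool" where
  "sq_int f \<longleftrightarrow> f \<in> borel_measurable lebesgue \<and> integrable lebesgue (\<lambda>x. (f x)\<^sup>2)"

definition C1c :: "('a::euclidean_space \<Rightarrow> real) \<Rightarrow> ('a \<Rightarrow> 'a \<Rightarrow> real) \<Rightarrow> bool" where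
  "C1c \<phi> \<phi>' \<longleftrightarrow> (\<forall>x. (\<phi> has_derivative \<phi>' x) (at x)) \<and>
     (\<forall>i\<in>Basis. continuous_on UNIV (\<lambda>x. \<phi>' x i)) \<and>
     (\<exists>K. compact K \<and> (\<forall>x. x \<notin> K \<longrightarrow> \<phi> x = 0))"

definition H1 :: "('a::euclidean_space \<Rightarrow> real) \<Rightarrow> bool" where
  "H1 v \<longleftrightarrow> sq_int v \<and>
     (\<exists>G :: 'a \<Rightarrow> 'a. (\<forall>i\<in>Basis. sq_int (\<lambda>x. G x \<bullet> i)) \<and>
        (\<forall>\<phi> \<phi>'. C1c \<phi> \<phi>' \<longrightarrow> (\<forall>i\<in>Basis.
            (LINT x|lebesgue. v x * \<phi>' x i) = - (LINT x|lebesgue. (G x \<bullet> i) * \<phi> x))))"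

definition H10 :: "'a::euclidean_space set \<Rightarrow> ('a \<Rightarrow> real) \<Rightarrow> bool" where
  "H10 T v \<longleftrightarrow> (\<forall>x. x \<notin> T \<longrightarrow> v x = 0) \<and> H1 v"

text \<open>Elementwise L2-projection onto constants: the value on each element.\<close>
definition Pi0 :: "('a::euclidean_space \<Rightarrow> real) \<Rightarrow> 'a set \<Rightarrow> real" where
  "Pi0 v T = (LINT x:T|lebesgue. v x) / measure lebesgue T"

definition verts :: "'a::euclidean_space set \<Rightarrow> 'a set" where
  "verts T = {z. \<forall>i\<in>Basis. z \<bullet> i = lo T i \<or> z \<bullet> i = hi T i}"

definition nodal :: "'a::euclidean_space set set \<Rightarrow> 'a set \<Rightarrow> ('a set \<Rightarrow> real) \<Rightarrow> 'a \<Rightarrow> real" where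
  "nodal Th D c z =
     (if z \<in> D then (\<Sum>T\<in>{T\<in>Th. z \<in> T}. c T) / real (card {T\<in>Th. z \<in> T}) else 0)"

definition qinterp :: "'a::euclidean_space set \<Rightarrow> ('a \<Rightarrow> real) \<Rightarrow> 'a \<Rightarrow> real" where
  "qinterp T nv x = (\<Sum>z\<in>verts T. nv z *
      (\<Prod>i\<in>Basis. if z \<bullet> i = lo T i then (hi T i - x \<bullet> i) / (hi T i - lo T i)
                                   else (x \<bullet> i - lo T i) / (hi T i - lo T i)))"

definition EH :: "'a::euclidean_space set set \<Rightarrow> 'a set \<Rightarrow> ('a set \<Rightarrow> real) \<Rightarrow> 'a \<Rightarrow> real" where
  "EH Th D c x = (if x \<in> \<Union>Th then qinterp (SOME T. T \<in> Th \<and> x \<in> T) (nodal Th D c) x else 0)"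

definition IH :: "'a::euclidean_space set set \<Rightarrow> 'a set \<Rightarrow> ('a \<Rightarrow> real) \<Rightarrow> 'a \<Rightarrow> real" where
  "IH Th D v = EH Th D (Pi0 v)"

definition BH :: "'a::euclidean_space set set \<Rightarrow> nat \<Rightarrow> (nat \<Rightarrow> 'a \<Rightarrow> nat)
                   \<Rightarrow> (nat \<Rightarrow> 'a set \<Rightarrow> 'a \<Rightarrow> real) \<Rightarrow> ('a \<Rightarrow> real) \<Rightarrow> 'a \<Rightarrow> real" where
  "BH Th p \<iota> bf v x = (\<Sum>T\<in>Th. \<Sum>j\<in>{1..(p + 1) ^ DIM('a)}.
        (LINT y:T|lebesgue. v y * Lam \<iota> j T y) * bf j T x)"

definition PH :: "'a::euclidean_space set set \<Rightarrow> 'a set \<Rightarrow> nat \<Rightarrow> (nat \<Rightarrow> 'a \<Rightarrow> nat)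
                   \<Rightarrow> (nat \<Rightarrow> 'a set \<Rightarrow> 'a \<Rightarrow> real) \<Rightarrow> ('a \<Rightarrow> real) \<Rightarrow> 'a \<Rightarrow> real" where
  "PH Th D p \<iota> bf v x = IH Th D v x + BH Th p \<iota> bf (\<lambda>y. v y - IH Th D v y) x"

end

theory Submission
  imports Defs "HOL-Computational_Algebra.Polynomial"
begin

lemma coeff_pderiv_iter:
  "coeff ((pderiv ^^ j) (p::real poly)) i = (fact (i+j) / fact i) * coeff p (i+j)"
proof (induction j arbitrary: i)
  case 0
  then show ?case by simp
next
  case (Suc j)
  have "coeff ((pderiv ^^ Suc j) p) i = coeff (pderiv ((pderiv ^^ j) p)) i" by simp
  also have "\<dots> = of_nat (Suc i) * coeff ((pderiv ^^ j) p) (Suc i)" by (simp add: coeff_pderiv)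
  also have "\<dots> = of_nat (Suc i) * ((fact (Suc i + j) / fact (Suc i)) * coeff p (Suc i + j))"
    using Suc by simp
  also have "\<dots> = (fact (i + Suc j) / fact i) * coeff p (i + Suc j)"
  proof -
    have f: "fact (Suc i) = real (Suc i) * (fact i :: real)" by (rule fact_Suc)
    have e: "Suc i + j = i + Suc j" by simp
    show ?thesis unfolding f e by (simp del: of_nat_Suc)
  qed
  finally show ?case .
qed

lemma degree_pderiv_iter: "degree ((pderiv ^^ j) (p::real poly)) \<le> degree p - j"
proof (induction j)
  case 0 then show ?case by simp
next
  case (Suc j) then show ?case by (simp add: degree_pderiv)
qed

lemma pderiv_iter_zero: "degree (p::real poly) < j \<Longrightarrow> (pderiv ^^ j) p = 0"
proof -
  assume "degree p < j"
  then obtain k0 where "j = Suc (degree p + k0)" using less_iff_Suc_add by blast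
  then obtain k where j: "j = k + Suc (degree p)" by simp
  have "degree ((pderiv ^^ degree p) p) = 0"
    using degree_pderiv_iter[of "degree p" p] by simp
  then have "pderiv ((pderiv ^^ degree p) p) = 0" by (simp add: pderiv_eq_0_iff)
  then have 1: "(pderiv ^^ Suc (degree p)) p = 0" by simp
  have 2: "(pderiv ^^ k) (0::real poly) = 0" by (induction k) (auto simp: pderiv_0)
  have "(pderiv ^^ j) p = (pderiv ^^ k) ((pderiv ^^ Suc (degree p)) p)"
    unfolding j funpow_add by simp
  then show ?thesis using 1 2 by simp
qed

definition U :: "nat \<Rightarrow> real poly" where "U n = monom 1 n * [:-1,1:]^n"
definition SL :: "nat \<Rightarrow> real poly" where "SL n = smult (1 / fact n) ((pderiv ^^ n) (U n))"
definition J :: "real poly \<Rightarrow> real" where "J r = integral {0..1} (poly r)"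

lemma coeff_U: "i \<le> n \<Longrightarrow> coeff (U n) (n + i) = of_nat (n choose i) * (-1) ^ (n - i)"
  unfolding U_def by (simp add: coeff_monom_mult coeff_linear_poly_power)

lemma coeff_U_high: "coeff (U n) (n + i) = 0" if "i > n"
proof -
  have "degree (U n) \<le> n + n" unfolding U_def
    by (rule order.trans[OF degree_mult_le]) (auto intro: order.trans[OF degree_power_le] simp: degree_monom_eq)
  then show ?thesis using that by (simp add: coeff_eq_0)
qed

lemma shleg_poly: "shleg n t = poly (SL n) t"
proof -
  have deg: "degree (SL n) \<le> n"
  proof -
    have "degree (U n) \<le> n + n" unfolding U_def
      by (rule order.trans[OF degree_mult_le]) (auto intro: order.trans[OF degree_power_le] simp: degree_monom_eq)
    then show ?thesis unfolding SL_def using degree_pderiv_iter[of n "U n"] by simp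
  qed
  have c: "coeff (SL n) k = (-1) ^ n * (real (n choose k) * real ((n + k) choose k) * (-1) ^ k)" if "k \<le> n" for k
  proof -
    have e1: "coeff (SL n) k = (1 / fact n) * ((fact (k+n) / fact k) * (of_nat (n choose k) * (-1) ^ (n - k)))"
      unfolding SL_def using coeff_U[OF that] by (simp add: coeff_pderiv_iter add.commute)
    have e2: "(fact (k+n) / fact k) / fact n = real ((n + k) choose k)"
    proof -
      have "fact k * fact n * ((n+k) choose k) = fact (n+k)" using binomial_fact_lemma[of k "n+k"] by simp
      then have "(fact k * fact n * real ((n+k) choose k) :: real) = fact (n+k)" by (metis of_nat_fact of_nat_mult)
      moreover have "fact k * fact n \<noteq> (0::real)" by simp
      ultimately show ?thesis unfolding divide_divide_eq_left add.commute[of k n]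
        by (metis nonzero_mult_div_cancel_left)
    qed
    have e3: "((-1::real) ^ (n - k)) = (-1) ^ n * (-1) ^ k"
      using that by (auto simp: minus_one_power_iff even_diff_nat)
    show ?thesis unfolding e1 e3 using e2 by (simp add: field_simps)
  qed
  have "poly (SL n) t = (\<Sum>i\<le>degree (SL n). coeff (SL n) i * t^i)" by (rule poly_altdef)
  also have "\<dots> = (\<Sum>k\<le>n. coeff (SL n) k * t ^ k)"
  proof (rule sum.mono_neutral_left)
    show "finite {..n}" by simp
    show "{..degree (SL n)} \<subseteq> {..n}" using deg by auto
    show "\<forall>i\<in>{..n} - {..degree (SL n)}. coeff (SL n) i * t ^ i = 0"
    proof
      fix i assume "i \<in> {..n} - {..degree (SL n)}"
      then have "degree (SL n) < i" by auto
      then show "coeff (SL n) i * t ^ i = 0" by (simp add: coeff_eq_0)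
    qed
  qed
  also have "\<dots> = shleg n t" unfolding shleg_def sum_distrib_left
  proof (rule sum.cong[OF refl])
    fix k assume "k \<in> {..n}"
    then have "k \<le> n" by simp
    then show "coeff (SL n) k * t ^ k = (-1) ^ n * (real (n choose k) * real ((n + k) choose k) * (- t) ^ k)"
      unfolding c[OF \<open>k \<le> n\<close>] power_minus[of t] by (simp only: mult_ac)
  qed
  finally show ?thesis by simp
qed

lemma integral_cmul_real: "integral S (\<lambda>x. c * f x) = c * integral S (f :: _ \<Rightarrow> real)"
  using integral_cmul[of S c f] by simp

lemma poly_integrable: "(\<lambda>x. poly r x) integrable_on {a..b::real}"
  by (intro integrable_continuous_interval continuous_intros)

lemma J_add: "J (p + q) = J p + J q"
proof -
  have e: "poly (p+q) = (\<lambda>x. poly p x + poly q x)" by auto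
  show ?thesis unfolding J_def e by (rule integral_add) (rule poly_integrable)+
qed

lemma J_diff: "J (p - q) = J p - J q"
proof -
  have e: "poly (p-q) = (\<lambda>x. poly p x - poly q x)" by auto
  show ?thesis unfolding J_def e by (rule integral_diff) (rule poly_integrable)+
qed

lemma J_smult: "J (smult c p) = c * J p"
proof -
  have e: "poly (smult c p) = (\<lambda>x. c * poly p x)" by auto
  show ?thesis unfolding J_def e by (rule integral_cmul_real)
qed

lemma J_minus: "J (- p) = - J p"
proof -
  have e: "poly (- p) = (\<lambda>x. - poly p x)" by auto
  show ?thesis unfolding J_def e by (rule integral_neg)
qed

lemma J_0: "J 0 = 0"
proof -
  have e: "poly 0 = (\<lambda>x::real. 0)" by auto
  show ?thesis unfolding J_def e by simp
qed

lemma J_pderiv: "J (pderiv q) = poly q 1 - poly q 0"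
proof -
  have "((\<lambda>x. poly (pderiv q) x) has_integral (poly q 1 - poly q 0)) {0..1}"
  proof (rule fundamental_theorem_of_calculus)
    show "(0::real) \<le> 1" by simp
    fix x :: real assume "x \<in> {0..1}"
    have "DERIV (\<lambda>x. poly q x) x :> poly (pderiv q) x" by simp
    then show "((\<lambda>x. poly q x) has_vector_derivative poly (pderiv q) x) (at x within {0..1})"
      by (simp add: has_real_derivative_iff_has_vector_derivative[symmetric] has_field_derivative_at_within)
  qed
  then show ?thesis unfolding J_def by (rule integral_unique)
qed

lemma J_parts: "J (p * pderiv q) = poly (p * q) 1 - poly (p * q) 0 - J (pderiv p * q)"
proof -
  have "J (pderiv (p * q)) = J (p * pderiv q) + J (pderiv p * q)"
    unfolding pderiv_mult J_add by (simp add: mult.commute)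
  then show ?thesis unfolding J_pderiv by simp
qed

lemma dvd_pderiv_lin: "[:c,1:] ^ Suc k dvd q \<Longrightarrow> [:c,1:] ^ k dvd pderiv (q :: real poly)"
proof -
  assume "[:c,1:] ^ Suc k dvd q"
  then obtain g where q: "q = [:c,1:] ^ Suc k * g" by (auto elim: dvdE)
  have "pderiv q = [:c,1:] ^ Suc k * pderiv g + g * (smult (of_nat (Suc k)) ([:c,1:] ^ k) * pderiv [:c,1:])"
    unfolding q pderiv_mult pderiv_power_Suc by simp
  also have "\<dots> = [:c,1:] ^ k * ([:c,1:] * pderiv g + smult (of_nat (Suc k)) g * pderiv [:c,1:])"
    by (simp add: algebra_simps)
  finally show ?thesis by simp
qed

lemma dvd_pderiv_iter: "[:c,1:] ^ m dvd q \<Longrightarrow> j \<le> m \<Longrightarrow> [:c,1:] ^ (m - j) dvd (pderiv ^^ j) (q :: real poly)"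
proof (induction j)
  case 0 then show ?case by simp
next
  case (Suc j)
  then have "[:c,1:] ^ Suc (m - Suc j) dvd (pderiv ^^ j) q" by (simp add: Suc_diff_Suc)
  then show ?case by (simp add: dvd_pderiv_lin)
qed

lemma U_vanish:
  assumes "j < n"
  shows "poly ((pderiv ^^ j) (U n)) 0 = 0" "poly ((pderiv ^^ j) (U n)) 1 = 0"
proof -
  have d0: "[:0,1:] ^ n dvd U n" unfolding U_def monom_altdef by simp
  have d1: "[:-1,1:] ^ n dvd U n" unfolding U_def by simp
  have p: "[:c,1:] dvd [:c,1:] ^ (n - j)" for c :: real using assms by simp
  have "[:-0,1:] dvd (pderiv ^^ j) (U n)"
    using dvd_trans[OF p dvd_pderiv_iter[OF d0]] assms by simp
  then show "poly ((pderiv ^^ j) (U n)) 0 = 0" by (simp only: poly_eq_0_iff_dvd)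
  have "[:-1,1:] dvd (pderiv ^^ j) (U n)"
    using dvd_trans[OF p dvd_pderiv_iter[OF d1]] assms by simp
  then show "poly ((pderiv ^^ j) (U n)) 1 = 0" by (simp only: poly_eq_0_iff_dvd)
qed

lemma J_byparts_U:
  "j \<le> n \<Longrightarrow> J (q * (pderiv ^^ j) (U n)) = (-1) ^ j * J ((pderiv ^^ j) q * U n)"
proof (induction j arbitrary: q)
  case 0 then show ?case by simp
next
  case (Suc j)
  let ?W = "(pderiv ^^ j) (U n)"
  have jn: "j < n" using Suc by simp
  have "J (q * (pderiv ^^ Suc j) (U n)) = J (q * pderiv ?W)" by simp
  also have "\<dots> = - J (pderiv q * ?W)"
    unfolding J_parts using U_vanish[OF jn] by simp
  also have "\<dots> = - ((-1) ^ j * J ((pderiv ^^ j) (pderiv q) * U n))"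
    using Suc jn by simp
  also have "(pderiv ^^ j) (pderiv q) = (pderiv ^^ Suc j) q"
    by (simp only: funpow_Suc_right comp_def)
  finally show ?case by simp
qed

lemma degree_SL: "degree (SL n) \<le> n"
proof -
  have "degree (U n) \<le> n + n" unfolding U_def
    by (rule order.trans[OF degree_mult_le]) (auto intro: order.trans[OF degree_power_le] simp: degree_monom_eq)
  then show ?thesis unfolding SL_def using degree_pderiv_iter[of n "U n"] by simp
qed

lemma J_SL_orth_lt:
  assumes "m < n" shows "J (SL m * SL n) = 0"
proof -
  have "SL m * SL n = smult (1 / fact n) (SL m * (pderiv ^^ n) (U n))"
    unfolding SL_def[of n] by simp
  then have "J (SL m * SL n) = (1 / fact n) * ((-1) ^ n * J ((pderiv ^^ n) (SL m) * U n))"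
    by (simp add: J_smult J_byparts_U)
  also have "(pderiv ^^ n) (SL m) = 0"
    using degree_SL[of m] assms by (intro pderiv_iter_zero) simp
  finally show ?thesis by (simp add: J_0)
qed

lemma J_SL_orth: "m \<noteq> n \<Longrightarrow> J (SL m * SL n) = 0"
  by (metis J_SL_orth_lt linorder_neqE_nat mult.commute)

lemma J_beta: "J (monom 1 a * [:1,-1:]^b) = fact a * fact b / fact (a+b+1)"
proof (induction b arbitrary: a)
  case 0
  have "monom 1 a = pderiv (monom (1 / real (Suc a)) (Suc a))"
    by (simp add: pderiv_monom del: of_nat_Suc)
  then have "J (monom 1 a) = 1 / real (Suc a)"
    by (simp add: J_pderiv poly_monom)
  moreover have "fact (Suc a) = real (Suc a) * fact a" by (rule fact_Suc)
  ultimately show ?case by simp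
next
  case (Suc b)
  let ?Q = "monom (1 / real (Suc a)) (Suc a)"
  let ?P = "[:1,-1:] ^ Suc b :: real poly"
  have pQ: "pderiv ?Q = monom 1 a"
    by (simp add: pderiv_monom del: of_nat_Suc)
  have "monom 1 a * ?P = ?P * pderiv ?Q" unfolding pQ by (rule mult.commute)
  then have "J (monom 1 a * ?P) = poly (?P * ?Q) 1 - poly (?P * ?Q) 0 - J (pderiv ?P * ?Q)"
    by (simp only: J_parts)
  also have "poly (?P * ?Q) 1 = 0" by simp
  also have "poly (?P * ?Q) 0 = 0" by (simp add: poly_monom)
  also have "pderiv ?P * ?Q = smult (- real (Suc b) / real (Suc a)) (monom 1 (Suc a) * [:1,-1:]^b)"
    by (rule poly_ext) (simp add: pderiv_power_Suc pderiv_pCons poly_monom del: of_nat_Suc power_Suc)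
  finally have X: "J (monom 1 a * ?P) = 0 - 0 - J (smult (- real (Suc b) / real (Suc a)) (monom 1 (Suc a) * [:1,-1:]^b))" .
  have "J (monom 1 a * ?P) = real (Suc b) / real (Suc a) * J (monom 1 (Suc a) * [:1,-1:]^b)"
    using X unfolding J_smult by (simp del: power_Suc of_nat_Suc)
  also have "\<dots> = real (Suc b) / real (Suc a) * (fact (Suc a) * fact b / fact (Suc a + b + 1))"
    by (simp only: Suc.IH)
  also have "\<dots> = fact a * fact (Suc b) / fact (a + Suc b + 1)"
  proof -
    have f1: "fact (Suc a) = real (Suc a) * fact a" by (rule fact_Suc)
    have f2: "fact (Suc b) = real (Suc b) * fact b" by (rule fact_Suc)
    have e: "Suc a + b + 1 = a + Suc b + 1" by simp
    show ?thesis unfolding f1 f2 e by (simp del: of_nat_Suc fact_Suc)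
  qed
  finally show ?case .
qed

lemma U_alt: "U n = smult ((-1) ^ n) (monom 1 n * [:1,-1:]^n)"
proof (rule poly_ext)
  fix x :: real
  have "(x - 1) ^ n = (-1) ^ n * (1 - x) ^ n"
    using power_minus[of "1 - x" n] by simp
  then show "poly (U n) x = poly (smult ((-1) ^ n) (monom 1 n * [:1,-1:]^n)) x"
    unfolding U_def by (simp add: poly_monom algebra_simps)
qed

lemma J_U: "J (U n) = (-1) ^ n * (fact n * fact n / fact (n + n + 1))"
  unfolding U_alt J_smult J_beta ..

lemma coeff_SL_top: "coeff (SL n) n = fact (n + n) / (fact n * fact n)"
  unfolding SL_def using coeff_U[of n n] by (simp add: coeff_pderiv_iter)

lemma SL_top_deriv: "(pderiv ^^ n) (SL n) = [: fact (n + n) / fact n :]"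
proof -
  have "degree ((pderiv ^^ n) (SL n)) = 0"
    using degree_pderiv_iter[of n "SL n"] degree_SL[of n] by simp
  then have "(pderiv ^^ n) (SL n) = [: coeff ((pderiv ^^ n) (SL n)) 0 :]"
    by (simp add: degree_0_id)
  also have "coeff ((pderiv ^^ n) (SL n)) 0 = fact (n + n) / fact n"
    by (simp add: coeff_pderiv_iter coeff_SL_top)
  finally show ?thesis .
qed

lemma J_SL_norm: "J (SL n * SL n) = 1 / (2 * real n + 1)"
proof -
  have "SL n * SL n = smult (1 / fact n) (SL n * (pderiv ^^ n) (U n))"
    unfolding SL_def[of n] by simp
  then have "J (SL n * SL n) = (1 / fact n) * ((-1) ^ n * J ((pderiv ^^ n) (SL n) * U n))"
    by (simp add: J_smult J_byparts_U)
  also have "(pderiv ^^ n) (SL n) * U n = smult (fact (n + n) / fact n) (U n)"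
    unfolding SL_top_deriv by simp
  also have "J \<dots> = fact (n + n) / fact n * ((-1) ^ n * (fact n * fact n / fact (n + n + 1)))"
    unfolding J_smult J_U ..
  also have "(1 / fact n) * ((-1) ^ n * (fact (n + n) / fact n * ((-1) ^ n * (fact n * fact n / fact (n + n + 1)))))
      = ((-1) ^ n * (-1) ^ n) * (fact (n + n) / fact (n + n + 1) :: real)"
    by (simp add: field_simps)
  also have "(-1::real) ^ n * (-1) ^ n = 1" by (simp flip: power_add)
  also have "fact (n + n + 1) = real (n + n + 1) * (fact (n + n) :: real)"
    by (simp only: Suc_eq_plus1[symmetric] fact_Suc)
  finally have F: "J (SL n * SL n) = 1 * (fact (n + n) / (real (n + n + 1) * fact (n + n)))" .
  have "fact (n + n) / (real (n + n + 1) * fact (n + n)) = 1 / (real (n + n + 1) :: real)"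
    by simp
  then show ?thesis using F by simp
qed

lemma pderiv_sum_poly: "pderiv (sum f A) = (\<Sum>x\<in>A. pderiv (f x))"
  using higher_pderiv_sum[of 1 f A] by simp

lemma antideriv_ex: "\<exists>F. pderiv F = (r :: real poly)"
proof
  show "pderiv (\<Sum>i\<le>degree r. monom (coeff r i / real (Suc i)) (Suc i)) = r"
    unfolding pderiv_sum_poly
    by (simp add: pderiv_monom poly_as_sum_of_monoms del: of_nat_Suc)
qed

lemma poly_interval_integral:
  fixes a b :: real assumes ab: "a < b"
  shows "((\<lambda>x. poly r ((x - a) / (b - a))) has_integral (b - a) * J r) {a..b}"
proof -
  obtain F where F: "pderiv F = r" using antideriv_ex by blast
  let ?G = "\<lambda>x. (b - a) * poly F ((x - a) / (b - a))"
  have "((\<lambda>x. poly r ((x - a) / (b - a))) has_integral (?G b - ?G a)) {a..b}"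
  proof (rule fundamental_theorem_of_calculus)
    show "a \<le> b" using ab by simp
    fix x assume "x \<in> {a..b}"
    have d1: "((\<lambda>x. (x - a) / (b - a)) has_field_derivative 1 / (b - a)) (at x within {a..b})"
      using ab by (auto intro!: derivative_eq_intros)
    have "(?G has_field_derivative (b - a) * (poly (pderiv F) ((x - a) / (b - a)) * (1 / (b - a)))) (at x within {a..b})"
      by (rule DERIV_cmult, rule DERIV_chain2[OF poly_DERIV d1])
    moreover have "(b - a) * (poly (pderiv F) ((x - a) / (b - a)) * (1 / (b - a))) = poly r ((x - a) / (b - a))"
      using ab F by simp
    ultimately show "(?G has_vector_derivative poly r ((x - a) / (b - a))) (at x within {a..b})"
      by (simp add: has_real_derivative_iff_has_vector_derivative[symmetric])
  qed
  moreover have "?G b - ?G a = (b - a) * J r"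
  proof -
    have Jr: "J r = poly F 1 - poly F 0" using J_pderiv[of F] F by simp
    show ?thesis unfolding Jr by (simp add: algebra_simps)
  qed
  ultimately show ?thesis by simp
qed

lemma leg1_orth:
  fixes a b :: real assumes ab: "a < b"
  shows "((\<lambda>x. leg1 m a b x * leg1 n a b x) has_integral (if m = n then 1 else 0)) {a..b}"
proof -
  let ?K = "sqrt ((2 * real m + 1) / (b - a)) * sqrt ((2 * real n + 1) / (b - a))"
  have e: "leg1 m a b x * leg1 n a b x = ?K * poly (SL m * SL n) ((x - a) / (b - a))" for x
    unfolding leg1_def shleg_poly by simp
  have "((\<lambda>x. ?K * poly (SL m * SL n) ((x - a) / (b - a))) has_integral ?K * ((b - a) * J (SL m * SL n))) {a..b}"
    by (rule has_integral_mult_right, rule poly_interval_integral[OF ab])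
  moreover have "?K * ((b - a) * J (SL m * SL n)) = (if m = n then 1 else 0)"
  proof (cases "m = n")
    case True
    have "?K = (2 * real n + 1) / (b - a)" using True ab
      by (simp add: real_sqrt_mult[symmetric])
    then show ?thesis using True ab J_SL_norm[of n]
      by (simp add: field_simps)
  next
    case False
    then show ?thesis using J_SL_orth by simp
  qed
  ultimately show ?thesis unfolding e by simp
qed

lemma lborel_integral_prod:
  fixes f :: "'a::euclidean_space \<Rightarrow> real \<Rightarrow> real"
  assumes int: "\<And>b. b \<in> Basis \<Longrightarrow> integrable lborel (f b)"
  shows "(\<integral>x. (\<Prod>b\<in>Basis. f b (x \<bullet> b)) \<partial>(lborel::'a measure)) = (\<Prod>b\<in>Basis. integral\<^sup>L lborel (f b))"
proof -
  interpret product_sigma_finite "\<lambda>_::'a. lborel :: real measure" by standard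
  have [measurable]: "f b \<in> borel_measurable borel" if "b \<in> Basis" for b
    using borel_measurable_integrable[OF int[OF that]] by simp
  have "(\<integral>x. (\<Prod>b\<in>Basis. f b (x \<bullet> b)) \<partial>(lborel::'a measure))
      = (\<integral>x. (\<Prod>b\<in>Basis. f b ((\<Sum>b'\<in>Basis. x b' *\<^sub>R b') \<bullet> b)) \<partial>(\<Pi>\<^sub>M b\<in>Basis. lborel))"
    by (subst lborel_eq, subst integral_distr) auto
  also have "\<dots> = (\<integral>x. (\<Prod>b\<in>Basis. f b (x b)) \<partial>(\<Pi>\<^sub>M b\<in>Basis. lborel))"
    by (intro Bochner_Integration.integral_cong refl prod.cong)
       (simp add: inner_sum_left inner_Basis if_distrib sum.delta cong: if_cong)
  also have "\<dots> = (\<Prod>b\<in>Basis. integral\<^sup>L lborel (f b))"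
    by (rule product_integral_prod) (auto intro: int)
  finally show ?thesis .
qed

lemma box_integral_prod:
  fixes a b :: "'a::euclidean_space" and g :: "'a \<Rightarrow> real \<Rightarrow> real"
  assumes ab: "\<And>i. i \<in> Basis \<Longrightarrow> a \<bullet> i \<le> b \<bullet> i"
    and cont: "\<And>i. i \<in> Basis \<Longrightarrow> continuous_on UNIV (g i)"
  shows "(LINT x:cbox a b|lebesgue. (\<Prod>i\<in>Basis. g i (x \<bullet> i))) = (\<Prod>i\<in>Basis. integral {a \<bullet> i..b \<bullet> i} (g i))"
proof -
  have [measurable]: "g i \<in> borel_measurable borel" if "i \<in> Basis" for i :: 'a
    using cont[OF that] by (rule borel_measurable_continuous_onI)
  have ind: "indicator (cbox a b) x = (\<Prod>i\<in>Basis. indicator {a \<bullet> i..b \<bullet> i} (x \<bullet> i) :: real)" for x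
    by (auto simp: cbox_def split: split_indicator)
  have eq: "indicator (cbox a b) x *\<^sub>R (\<Prod>i\<in>Basis. g i (x \<bullet> i))
      = (\<Prod>i\<in>Basis. indicator {a \<bullet> i..b \<bullet> i} (x \<bullet> i) * g i (x \<bullet> i))" for x
    unfolding ind by (simp add: prod.distrib)
  have m: "(\<lambda>x. \<Prod>i\<in>Basis. indicator {a \<bullet> i..b \<bullet> i} (x \<bullet> i) * g i (x \<bullet> i)) \<in> borel_measurable (lborel::'a measure)"
    by measurable
  have intg: "integrable lborel (\<lambda>t. indicator {a \<bullet> i..b \<bullet> i} t * g i t)" if "i \<in> Basis" for i :: 'a
    using borel_integrable_compact[of "{a \<bullet> i..b \<bullet> i}" "g i"] cont[OF that]
    by (auto intro: continuous_on_subset)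
  have "(LINT x:cbox a b|lebesgue. (\<Prod>i\<in>Basis. g i (x \<bullet> i)))
      = (\<integral>x. (\<Prod>i\<in>Basis. indicator {a \<bullet> i..b \<bullet> i} (x \<bullet> i) * g i (x \<bullet> i)) \<partial>lebesgue)"
    unfolding set_lebesgue_integral_def eq ..
  also have "\<dots> = (\<integral>x. (\<Prod>i\<in>Basis. indicator {a \<bullet> i..b \<bullet> i} (x \<bullet> i) * g i (x \<bullet> i)) \<partial>lborel)"
    using m by (rule integral_completion)
  also have "\<dots> = (\<Prod>i\<in>Basis. (\<integral>t. indicator {a \<bullet> i..b \<bullet> i} t * g i t \<partial>lborel))"
    by (rule lborel_integral_prod[of "\<lambda>i t. indicator {a \<bullet> i..b \<bullet> i} t * g i t", OF intg])
  also have "\<dots> = (\<Prod>i\<in>Basis. integral {a \<bullet> i..b \<bullet> i} (g i))"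
  proof (rule prod.cong[OF refl])
    fix i :: 'a assume i: "i \<in> Basis"
    have "set_integrable lborel {a \<bullet> i..b \<bullet> i} (g i)"
      unfolding set_integrable_def using intg[OF i] by simp
    from set_borel_integral_eq_integral(2)[OF this]
    show "(\<integral>t. indicator {a \<bullet> i..b \<bullet> i} t * g i t \<partial>lborel) = integral {a \<bullet> i..b \<bullet> i} (g i)"
      unfolding set_lebesgue_integral_def by simp
  qed
  finally show ?thesis .
qed

lemma poly_sum_upto:
  assumes "degree (P :: real poly) \<le> p"
  shows "poly P t = (\<Sum>k\<le>p. coeff P k * t ^ k)"
proof -
  have "poly P t = (\<Sum>i\<le>degree P. coeff P i * t^i)" by (rule poly_altdef)
  also have "\<dots> = (\<Sum>k\<le>p. coeff P k * t ^ k)"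
  proof (rule sum.mono_neutral_left)
    show "finite {..p}" by simp
    show "{..degree P} \<subseteq> {..p}" using assms by auto
    show "\<forall>i\<in>{..p} - {..degree P}. coeff P i * t ^ i = 0"
    proof
      fix i assume "i \<in> {..p} - {..degree P}"
      then have "degree P < i" by auto
      then show "coeff P i * t ^ i = 0" by (simp add: coeff_eq_0)
    qed
  qed
  finally show ?thesis .
qed

lemma Qp_prod:
  fixes P :: "'a::euclidean_space \<Rightarrow> real poly"
  assumes deg: "\<And>i. i \<in> Basis \<Longrightarrow> degree (P i) \<le> p"
  shows "Qp p (\<lambda>x::'a. \<Prod>i\<in>Basis. poly (P i) (x \<bullet> i))"
  unfolding Qp_def
proof (intro exI allI)
  fix x :: 'a
  let ?c = "\<lambda>\<alpha>::'a \<Rightarrow> nat. \<Prod>i\<in>Basis. coeff (P i) (\<alpha> i)"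
  have "(\<Prod>i\<in>Basis. poly (P i) (x \<bullet> i)) = (\<Prod>i\<in>Basis. \<Sum>k\<in>{..p}. coeff (P i) k * (x \<bullet> i) ^ k)"
    by (intro prod.cong refl poly_sum_upto deg) auto
  also have "\<dots> = (\<Sum>g\<in>PiE Basis (\<lambda>_. {..p}). \<Prod>i\<in>Basis. coeff (P i) (g i) * (x \<bullet> i) ^ (g i))"
    by (rule prod_sum_PiE) auto
  also have "\<dots> = (\<Sum>\<alpha>\<in>MI p. \<Prod>i\<in>Basis. coeff (P i) (\<alpha> i) * (x \<bullet> i) ^ (\<alpha> i))"
  proof (rule sum.reindex_bij_witness[where j = "\<lambda>g i. if i \<in> Basis then g i else 0" and i = "\<lambda>\<alpha>. restrict \<alpha> Basis"])
    fix \<alpha> :: "'a \<Rightarrow> nat" assume a: "\<alpha> \<in> MI p"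
    show "(\<lambda>i. if i \<in> Basis then restrict \<alpha> Basis i else 0) = \<alpha>"
      using a by (auto simp: MI_def fun_eq_iff)
    show "restrict \<alpha> Basis \<in> PiE Basis (\<lambda>_. {..p})"
      using a by (auto simp: MI_def)
  next
    fix g assume g: "g \<in> PiE Basis (\<lambda>_::'a. {..p})"
    show "restrict (\<lambda>i. if i \<in> Basis then g i else 0) Basis = g"
      using g by (auto simp: fun_eq_iff PiE_def extensional_def)
    show "(\<lambda>i. if i \<in> Basis then g i else 0) \<in> MI p"
      using g by (auto simp: MI_def)
    show "(\<Prod>i\<in>Basis. coeff (P i) ((\<lambda>i. if i \<in> Basis then g i else 0) i) * (x \<bullet> i) ^ ((\<lambda>i. if i \<in> Basis then g i else 0) i))
        = (\<Prod>i\<in>Basis. coeff (P i) (g i) * (x \<bullet> i) ^ (g i))"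
      by (intro prod.cong refl) auto
  qed
  also have "\<dots> = (\<Sum>\<alpha>\<in>MI p. ?c \<alpha> * mono \<alpha> x)"
    unfolding mono_def by (simp add: prod.distrib)
  finally show "(\<Prod>i\<in>Basis. poly (P i) (x \<bullet> i)) = (\<Sum>\<alpha>\<in>MI p. ?c \<alpha> * mono \<alpha> x)" .
qed

lemma Qp_scale: "Qp p q \<Longrightarrow> Qp p (\<lambda>x. c * q x)"
  unfolding Qp_def
proof -
  assume "\<exists>d. \<forall>x. q x = (\<Sum>\<alpha>\<in>MI p. d \<alpha> * mono \<alpha> x)"
  then obtain d where d: "\<forall>x. q x = (\<Sum>\<alpha>\<in>MI p. d \<alpha> * mono \<alpha> x)" by blast
  show "\<exists>d. \<forall>x. c * q x = (\<Sum>\<alpha>\<in>MI p. d \<alpha> * mono \<alpha> x)"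
    by (rule exI[of _ "\<lambda>\<alpha>. c * d \<alpha>"]) (simp add: d sum_distrib_left mult.assoc)
qed

lemma Qp_const: "Qp p (\<lambda>x::'a::euclidean_space. c)"
proof -
  have "Qp p (\<lambda>x::'a. \<Prod>i\<in>Basis. poly (1::real poly) (x \<bullet> i))"
    by (rule Qp_prod) simp
  then have "Qp p (\<lambda>x::'a. c * (\<Prod>i\<in>Basis. poly (1::real poly) (x \<bullet> i)))"
    by (rule Qp_scale)
  then show ?thesis by simp
qed

definition LP :: "nat \<Rightarrow> real \<Rightarrow> real \<Rightarrow> real poly" where
  "LP n a b = smult (sqrt ((2 * real n + 1) / (b - a))) (pcompose (SL n) [: - a / (b - a), 1 / (b - a) :])"

lemma poly_LP: "poly (LP n a b) x = leg1 n a b x"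
  unfolding LP_def leg1_def by (simp add: poly_pcompose shleg_poly diff_divide_distrib)

lemma degree_LP: "degree (LP n a b) \<le> n"
proof -
  have "degree (LP n a b) \<le> degree (pcompose (SL n) [: - a / (b - a), 1 / (b - a) :])"
    unfolding LP_def by (rule degree_smult_le)
  also have "\<dots> \<le> degree (SL n) * degree [: - a / (b - a), 1 / (b - a) :]"
    by (rule degree_pcompose_le)
  also have "\<dots> \<le> n * 1"
    by (intro mult_mono degree_SL) auto
  finally show ?thesis by simp
qed

lemma Lam_Qp:
  assumes "\<iota> k \<in> MI p"
  shows "Qp p (Lam \<iota> k T)"
proof -
  have "Qp p (\<lambda>x. \<Prod>i\<in>Basis. poly (LP (\<iota> k i) (lo T i) (hi T i)) (x \<bullet> i))"
    by (rule Qp_prod) (use assms in \<open>auto simp: MI_def intro: order.trans[OF degree_LP]\<close>)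
  moreover have "(\<lambda>x. \<Prod>i\<in>Basis. poly (LP (\<iota> k i) (lo T i) (hi T i)) (x \<bullet> i)) = Lam \<iota> k T"
    by (simp add: fun_eq_iff Lam_def legTP_def poly_LP)
  ultimately show ?thesis by simp
qed

lemma leg1_cont: "continuous_on UNIV (leg1 n a b)"
proof -
  have "leg1 n a b = poly (LP n a b)" by (simp add: fun_eq_iff poly_LP)
  then show ?thesis by (simp add: continuous_on_poly continuous_on_id)
qed

lemma Lam_cont: "continuous_on UNIV (Lam \<iota> k T)"
  unfolding Lam_def legTP_def
  by (intro continuous_on_prod continuous_on_compose2[OF leg1_cont] continuous_intros) auto

lemma lohi:
  fixes a b :: "'a::euclidean_space"
  assumes ab: "\<forall>i\<in>Basis. a \<bullet> i < b \<bullet> i" and i: "i \<in> Basis"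
  shows "lo (cbox a b) i = a \<bullet> i" "hi (cbox a b) i = b \<bullet> i"
proof -
  have a: "a \<in> cbox a b" and b: "b \<in> cbox a b" using ab by (auto simp: mem_box less_imp_le)
  show "lo (cbox a b) i = a \<bullet> i" unfolding lo_def
    by (rule cInf_eq_minimum) (use a i in \<open>auto simp: mem_box\<close>)
  show "hi (cbox a b) i = b \<bullet> i" unfolding hi_def
    by (rule cSup_eq_maximum) (use b i in \<open>auto simp: mem_box\<close>)
qed

lemma Lam_orth:
  fixes a b :: "'a::euclidean_space"
  assumes ab: "\<forall>i\<in>Basis. a \<bullet> i < b \<bullet> i"
  shows "(LINT x:cbox a b|lebesgue. Lam \<iota> k (cbox a b) x * Lam \<iota> j (cbox a b) x)
       = (if (\<forall>i\<in>Basis. \<iota> k i = \<iota> j i) then 1 else 0)"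
proof -
  let ?g = "\<lambda>i t. leg1 (\<iota> k i) (a \<bullet> i) (b \<bullet> i) t * leg1 (\<iota> j i) (a \<bullet> i) (b \<bullet> i) t"
  have e: "Lam \<iota> k (cbox a b) x * Lam \<iota> j (cbox a b) x = (\<Prod>i\<in>Basis. ?g i (x \<bullet> i))" for x
    unfolding Lam_def legTP_def prod.distrib[symmetric]
    by (intro prod.cong refl) (simp add: lohi[OF ab])
  have "(LINT x:cbox a b|lebesgue. (\<Prod>i\<in>Basis. ?g i (x \<bullet> i))) = (\<Prod>i\<in>Basis. integral {a \<bullet> i..b \<bullet> i} (?g i))"
    by (rule box_integral_prod) (use ab in \<open>auto intro: less_imp_le continuous_on_mult leg1_cont\<close>)
  also have "\<dots> = (\<Prod>i\<in>Basis. if \<iota> k i = \<iota> j i then 1 else 0)"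
    by (intro prod.cong refl integral_unique leg1_orth) (use ab in auto)
  also have "\<dots> = (if (\<forall>i\<in>Basis. \<iota> k i = \<iota> j i) then 1 else 0)"
    by (auto simp: prod_zero_iff)
  finally show ?thesis unfolding e .
qed

lemma mesh_box:
  assumes "is_mesh Th D" "T \<in> Th"
  shows "\<exists>a b. T = cbox a b \<and> (\<forall>i\<in>Basis. a \<bullet> i < b \<bullet> i)"
proof -
  have "\<forall>T\<in>Th. \<exists>a b. T = cbox a b \<and> (\<forall>i\<in>Basis. a \<bullet> i < b \<bullet> i)"
    using assms(1) unfolding is_mesh_def by (elim conjE)
  then show ?thesis using assms(2) by (rule bspec)
qed

lemma mesh_disj:
  assumes mesh: "is_mesh Th D" and T: "T \<in> Th" and T': "T' \<in> Th" and ne: "T \<noteq> T'"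
  shows "interior T' \<inter> T = {}"
proof -
  obtain a b where Tb: "T = cbox a b" and ab: "\<forall>i\<in>Basis. a \<bullet> i < b \<bullet> i"
    using mesh_box[OF mesh T] by blast
  have "\<forall>T\<in>Th. \<forall>T'\<in>Th. T \<noteq> T' \<longrightarrow> interior T \<inter> interior T' = {} \<and> (T \<inter> T') face_of T \<and> (T \<inter> T') face_of T'"
    using mesh unfolding is_mesh_def by (elim conjE)
  then have "interior T \<inter> interior T' = {}" using T T' ne by blast
  moreover have "T = closure (interior T)"
  proof -
    have "box a b \<noteq> {}" using ab by (simp add: box_ne_empty)
    then show ?thesis unfolding Tb by simp
  qed
  ultimately show ?thesis
    using open_Int_closure_eq_empty[of "interior T'" "interior T"] by (metis inf_commute open_interior)
qed

lemma mesh_int_sub: "is_mesh Th D \<Longrightarrow> T \<in> Th \<Longrightarrow> interior T \<subseteq> D"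
  unfolding is_mesh_def by (metis Union_upper interior_mono)

lemma mesh_open: "is_mesh Th D \<Longrightarrow> open D"
  unfolding is_mesh_def by (metis open_interior)

lemma cont_meas_lebesgue: "continuous_on UNIV f \<Longrightarrow> (f :: 'a::euclidean_space \<Rightarrow> real) \<in> borel_measurable lebesgue"
  using borel_measurable_continuous_onI[of f] by (intro measurable_completion) simp

lemma cbox_sets_lebesgue: "cbox a b \<in> sets lebesgue"
  by (simp add: fmeasurableD lmeasurable_cbox)

lemma set_integrable_cont_box:
  fixes f :: "'a::euclidean_space \<Rightarrow> real"
  assumes "continuous_on UNIV f"
  shows "set_integrable lebesgue (cbox a b) f"
proof -
  have "integrable lborel (\<lambda>x. indicator (cbox a b) x *\<^sub>R f x)"
    using assms by (intro borel_integrable_compact) (auto intro: continuous_on_subset)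
  moreover have "(\<lambda>x. indicator (cbox a b) x *\<^sub>R f x) \<in> borel_measurable lborel"
    using borel_measurable_continuous_onI[OF assms] by measurable
  ultimately show ?thesis unfolding set_integrable_def by (simp add: integrable_completion)
qed

lemma abs_le_sq1: "\<bar>t::real\<bar> \<le> t\<^sup>2 + 1"
proof (cases "\<bar>t\<bar> \<le> 1")
  case True then show ?thesis by (smt (verit) zero_le_power2)
next
  case False
  then have "\<bar>t\<bar> * 1 \<le> \<bar>t\<bar> * \<bar>t\<bar>" by (intro mult_left_mono) auto
  then show ?thesis by (simp add: power2_eq_square abs_mult_self_eq)
qed

lemma set_integrable_sq_cont:
  fixes b f :: "'a::euclidean_space \<Rightarrow> real"
  assumes bm: "b \<in> borel_measurable lebesgue" and bsq: "integrable lebesgue (\<lambda>x. (b x)\<^sup>2)"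
    and fc: "continuous_on UNIV f"
  shows "set_integrable lebesgue (cbox l u) (\<lambda>x. b x * f x)"
proof -
  have "compact (f ` cbox l u)" by (intro compact_continuous_image continuous_on_subset[OF fc]) auto
  then obtain M where M: "M > 0" "\<And>y. y \<in> f ` cbox l u \<Longrightarrow> norm y \<le> M"
    using compact_imp_bounded bounded_pos by metis
  have fm: "f \<in> borel_measurable lebesgue" by (rule cont_meas_lebesgue[OF fc])
  have one: "integrable lebesgue (\<lambda>x. indicator (cbox l u) x *\<^sub>R (1::real))"
    using set_integrable_cont_box[of "\<lambda>_. 1::real" l u] unfolding set_integrable_def by simp
  have i1: "integrable lebesgue (\<lambda>x. M * ((b x)\<^sup>2 + indicator (cbox l u) x *\<^sub>R (1::real)))"
    by (intro integrable_mult_right Bochner_Integration.integrable_add bsq one)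
  have i2: "(\<lambda>x. indicator (cbox l u) x *\<^sub>R (b x * f x)) \<in> borel_measurable lebesgue"
    using bm fm cbox_sets_lebesgue[of l u] by measurable
  have i3: "norm (indicator (cbox l u) x *\<^sub>R (b x * f x)) \<le> norm (M * ((b x)\<^sup>2 + indicator (cbox l u) x *\<^sub>R (1::real)))" for x
  proof (cases "x \<in> cbox l u")
    case True
    have "\<bar>f x\<bar> \<le> M" using M(2)[of "f x"] True by auto
    then have "\<bar>b x * f x\<bar> \<le> \<bar>b x\<bar> * M" by (simp add: abs_mult mult_left_mono)
    also have "\<dots> \<le> ((b x)\<^sup>2 + 1) * M" using abs_le_sq1[of "b x"] M(1) by (intro mult_right_mono) auto
    finally show ?thesis using True M(1) by (simp add: mult.commute)
  next
    case False
    then show ?thesis using M(1) by simp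
  qed
  show ?thesis unfolding set_integrable_def
    by (rule Bochner_Integration.integrable_bound[OF i1 i2 AE_I2[OF i3]])
qed

lemma VH_ext:
  assumes mesh: "is_mesh Th D" and T: "T \<in> Th" and q: "Qp p q" and qc: "continuous_on UNIV q"
  shows "VH Th D p (\<lambda>x. if x \<in> T then q x else 0)"
  unfolding VH_def
proof (intro conjI ballI)
  obtain a b where Tb: "T = cbox a b" using mesh_box[OF mesh T] by blast
  have Dm: "D \<in> sets lebesgue" using mesh_open[OF mesh] by (simp add: borel_open sets_completionI_sets)
  have qm: "q \<in> borel_measurable lebesgue" by (rule cont_meas_lebesgue[OF qc])
  have e: "(\<lambda>x. indicator D x * (if x \<in> T then q x else 0)) = (\<lambda>x. indicator D x * (indicator T x * q x))"
    by (auto simp: fun_eq_iff indicator_def)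
  show "(\<lambda>x. indicator D x * (if x \<in> T then q x else 0)) \<in> borel_measurable lebesgue"
    unfolding e using Dm qm cbox_sets_lebesgue[of a b] unfolding Tb by measurable
  fix T'' assume T'': "T'' \<in> Th"
  show "\<exists>q'. Qp p q' \<and> (\<forall>x\<in>interior T''. (if x \<in> T then q x else 0) = q' x)"
  proof (cases "T'' = T")
    case True
    then show ?thesis using q interior_subset by (intro exI[of _ q]) auto
  next
    case False
    have "interior T'' \<inter> T = {}" using mesh_disj[OF mesh T T''] False by auto
    then show ?thesis using Qp_const[of p 0] by (intro exI[of _ "\<lambda>_. 0"]) auto
  qed
qed

theorem mainTheorem6:
  fixes Th :: "'a::euclidean_space set set" and D :: "'a set" and p :: nat
    and \<iota> :: "nat \<Rightarrow> 'a \<Rightarrow> nat" and bf :: "nat \<Rightarrow> 'a set \<Rightarrow> 'a \<Rightarrow> real"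
    and T :: "'a set" and j :: nat
  assumes mesh: "is_mesh Th D"
    and enum: "legendre_enum p \<iota>"
    and bubbles: "\<forall>T'\<in>Th. \<forall>k\<in>{1..(p + 1) ^ DIM('a)}.
                    H10 T' (bf k T') \<and>
                    L2proj Th D p (bf k T') (\<lambda>x. if x \<in> T' then Lam \<iota> k T' x else 0)"
    and T: "T \<in> Th"
    and j: "j \<in> {2..(p + 1) ^ DIM('a)}"
  shows "PH Th D p \<iota> bf (bf j T) = bf j T"
proof -
  define N where "N = (p + 1) ^ DIM('a)"
  define b where "b = bf j T"
  have fin: "finite Th" using mesh by (simp add: is_mesh_def)
  obtain aT bT where Tbox: "T = cbox aT bT" and ab: "\<forall>i\<in>Basis. aT \<bullet> i < bT \<bullet> i"
    using mesh_box[OF mesh T] by blast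
  have j1: "j \<in> {1..N}" using j unfolding N_def by auto
  have bj: "H10 T b \<and> L2proj Th D p b (\<lambda>x. if x \<in> T then Lam \<iota> j T x else 0)"
    using bubbles T j1 unfolding N_def b_def by blast
  have bzero: "\<And>x. x \<notin> T \<Longrightarrow> b x = 0" using bj unfolding H10_def by blast
  have bm: "b \<in> borel_measurable lebesgue" and bsq: "integrable lebesgue (\<lambda>x. (b x)\<^sup>2)"
    using bj unfolding H10_def H1_def sq_int_def by blast+
  have L2: "\<And>q. VH Th D p q \<Longrightarrow> (LINT x:D|lebesgue. (b x - (if x \<in> T then Lam \<iota> j T x else 0)) * q x) = 0"
    using bj unfolding L2proj_def by blast
  have bij: "bij_betw \<iota> {1..N} (MI p)" and i1: "\<iota> 1 = (\<lambda>_. 0)"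
    using enum unfolding legendre_enum_def N_def by blast+
  have inj: "inj_on \<iota> {1..N}" using bij by (rule bij_betw_imp_inj_on)
  have MIk: "\<And>k. k \<in> {1..N} \<Longrightarrow> \<iota> k \<in> MI p" using bij by (auto dest: bij_betw_apply)
  have null: "cbox aT bT - box aT bT \<in> null_sets lebesgue"
    using negligible_frontier_interval negligible_iff_null_sets by blast
  have AEnull: "AE y in lebesgue. y \<notin> cbox aT bT - box aT bT"
    using null by (rule AE_not_in)

  have outside: "(LINT y:T'|lebesgue. b y * f y) = 0" if T': "T' \<in> Th" "T' \<noteq> T" for T' f
  proof -
    have disj: "interior T \<inter> T' = {}" using mesh_disj[OF mesh T'(1) T] T'(2) by auto
    have "AE y in lebesgue. indicator T' y *\<^sub>R (b y * f y) = 0"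
      using AEnull
    proof eventually_elim
      case (elim y)
      show ?case
      proof (cases "y \<in> T'")
        case True
        then have "y \<notin> interior T" using disj by auto
        then have "y \<notin> T" using elim unfolding Tbox by auto
        then show ?thesis using bzero by simp
      qed simp
    qed
    then show ?thesis unfolding set_lebesgue_integral_def by (rule integral_eq_zero_AE)
  qed

  have coef: "(LINT y:T|lebesgue. b y * Lam \<iota> k T y) = (if k = j then 1 else 0)" if k: "k \<in> {1..N}" for k
  proof -
    let ?w = "\<lambda>x. if x \<in> T then Lam \<iota> k T x else 0"
    let ?wj = "\<lambda>x. if x \<in> T then Lam \<iota> j T x else 0"
    have VHk: "VH Th D p ?w"
      by (rule VH_ext[OF mesh T Lam_Qp[of \<iota> k p T, OF MIk[OF k]] Lam_cont])
    have z: "(LINT x:D|lebesgue. (b x - ?wj x) * ?w x) = 0" by (rule L2[OF VHk])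
    have intsub: "interior T \<subseteq> D" by (rule mesh_int_sub[OF mesh T])
    have mk: "Lam \<iota> k T \<in> borel_measurable lebesgue" and mj: "Lam \<iota> j T \<in> borel_measurable lebesgue"
      by (rule cont_meas_lebesgue[OF Lam_cont])+
    have Dm: "D \<in> sets lebesgue" using mesh_open[OF mesh] by (simp add: borel_open sets_completionI_sets)
    have Tm: "T \<in> sets lebesgue" unfolding Tbox by (rule cbox_sets_lebesgue)
    have "(LINT x:D|lebesgue. (b x - ?wj x) * ?w x) = (LINT x:T|lebesgue. (b x - Lam \<iota> j T x) * Lam \<iota> k T x)"
      unfolding set_lebesgue_integral_def
    proof (rule integral_cong_AE)
      have e1: "(\<lambda>x. indicator D x *\<^sub>R ((b x - ?wj x) * ?w x)) = (\<lambda>x. indicator D x * (indicator T x * ((b x - Lam \<iota> j T x) * Lam \<iota> k T x)))"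
        by (auto simp: fun_eq_iff indicator_def)
      show "(\<lambda>x. indicator D x *\<^sub>R ((b x - ?wj x) * ?w x)) \<in> borel_measurable lebesgue"
        unfolding e1 using Dm Tm bm mk mj by measurable
      show "(\<lambda>x. indicator T x *\<^sub>R ((b x - Lam \<iota> j T x) * Lam \<iota> k T x)) \<in> borel_measurable lebesgue"
        using Tm bm mk mj by measurable
      show "AE x in lebesgue. indicator D x *\<^sub>R ((b x - ?wj x) * ?w x) = indicator T x *\<^sub>R ((b x - Lam \<iota> j T x) * Lam \<iota> k T x)"
        using AEnull
      proof eventually_elim
        case (elim x)
        show ?case
        proof (cases "x \<in> T")
          case True
          then have "x \<in> interior T" using elim unfolding Tbox by auto
          then have "x \<in> D" using intsub by auto
          then show ?thesis using True by simp
        qed simp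
      qed
    qed
    also have "\<dots> = (LINT x:T|lebesgue. b x * Lam \<iota> k T x - Lam \<iota> j T x * Lam \<iota> k T x)"
      by (simp add: left_diff_distrib)
    also have "\<dots> = (LINT x:T|lebesgue. b x * Lam \<iota> k T x) - (LINT x:T|lebesgue. Lam \<iota> j T x * Lam \<iota> k T x)"
    proof (rule set_integral_diff(2))
      show "set_integrable lebesgue T (\<lambda>x. b x * Lam \<iota> k T x)"
        unfolding Tbox by (rule set_integrable_sq_cont[OF bm bsq Lam_cont])
      show "set_integrable lebesgue T (\<lambda>x. Lam \<iota> j T x * Lam \<iota> k T x)"
        unfolding Tbox by (intro set_integrable_cont_box continuous_on_mult Lam_cont)
    qed
    also have "(LINT x:T|lebesgue. Lam \<iota> j T x * Lam \<iota> k T x) = (if (\<forall>i\<in>Basis. \<iota> j i = \<iota> k i) then 1 else 0)"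
      unfolding Tbox by (rule Lam_orth[OF ab])
    also have "(\<forall>i\<in>Basis. \<iota> j i = \<iota> k i) \<longleftrightarrow> k = j"
    proof
      assume "\<forall>i\<in>Basis. \<iota> j i = \<iota> k i"
      then have "\<iota> j = \<iota> k" using MIk[OF j1] MIk[OF k] by (auto simp: MI_def fun_eq_iff)
      then show "k = j" using inj j1 k by (auto dest: inj_onD)
    qed simp
    finally show ?thesis using z by simp
  qed

  have Pi0z: "Pi0 b T' = 0" if T': "T' \<in> Th" for T'
  proof (cases "T' = T")
    case False
    have "(LINT y:T'|lebesgue. b y * 1) = 0" using outside[OF T' False] .
    then show ?thesis unfolding Pi0_def by simp
  next
    case True
    define c where "c = (\<Prod>i\<in>Basis. sqrt (1 / (hi T i - lo T i)))"
    have L1: "Lam \<iota> 1 T y = c" for y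
      unfolding Lam_def legTP_def leg1_def c_def i1 by (simp add: shleg_def)
    have "c \<noteq> 0" unfolding c_def Tbox using ab by (auto simp: lohi less_imp_neq[symmetric])
    have one: "1 \<in> {1..N}" unfolding N_def by simp
    have "(LINT y:T|lebesgue. b y * Lam \<iota> 1 T y) = 0" using coef[OF one] j by simp
    then have "(LINT y:T|lebesgue. b y * c) = 0" unfolding L1 .
    moreover have "(LINT y:T|lebesgue. b y * c) = (LINT y:T|lebesgue. b y) * c"
      unfolding set_lebesgue_integral_def by (simp add: mult.assoc[symmetric])
    ultimately have "(LINT y:T|lebesgue. b y) = 0" using \<open>c \<noteq> 0\<close> by simp
    then show ?thesis unfolding Pi0_def True by simp
  qed

  have IHz: "IH Th D b = (\<lambda>_. 0)"
  proof -
    have "nodal Th D (Pi0 b) = (\<lambda>_. 0)"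
      unfolding nodal_def by (auto simp: fun_eq_iff Pi0z intro!: sum.neutral)
    then show ?thesis unfolding IH_def EH_def by (simp add: fun_eq_iff qinterp_def)
  qed

  show ?thesis
  proof
    fix x
    have "PH Th D p \<iota> bf b x = BH Th p \<iota> bf b x" unfolding PH_def IHz by simp
    also have "\<dots> = (\<Sum>T'\<in>Th. \<Sum>k\<in>{1..N}. (LINT y:T'|lebesgue. b y * Lam \<iota> k T' y) * bf k T' x)"
      unfolding BH_def N_def ..
    also have "\<dots> = (\<Sum>k\<in>{1..N}. (LINT y:T|lebesgue. b y * Lam \<iota> k T y) * bf k T x)
        + (\<Sum>T'\<in>Th - {T}. \<Sum>k\<in>{1..N}. (LINT y:T'|lebesgue. b y * Lam \<iota> k T' y) * bf k T' x)"
      by (rule sum.remove[OF fin T])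
    also have "(\<Sum>T'\<in>Th - {T}. \<Sum>k\<in>{1..N}. (LINT y:T'|lebesgue. b y * Lam \<iota> k T' y) * bf k T' x) = 0"
      by (intro sum.neutral ballI) (auto simp: outside)
    also have "(\<Sum>k\<in>{1..N}. (LINT y:T|lebesgue. b y * Lam \<iota> k T y) * bf k T x)
        = (\<Sum>k\<in>{1..N}. if k = j then bf k T x else 0)"
      by (intro sum.cong refl) (simp add: coef)
    also have "\<dots> = bf j T x" using j1 by simp
    finally show "PH Th D p \<iota> bf (bf j T) x = bf j T x" unfolding b_def by simp
  qed
qed

end
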